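(* (i) Every flat and every semibundle of $\mathfrak M$ is a $\boldsymbol\pi$-clique. (ii) Every semiflat and every proper semibundle of $\mathfrak M$ is a $\boldsymbol\rho$-clique.
   Context: Setup. Let $V$ be a vector space of finite dimension $n\ge 3$ over a division ring; $\mathrm{Sub}_j(V)$ is the set of $j$-dimensional subspaces of $V$. Fix $k$ with $1<k<n-1$, a subspace $W$ of $V$ with $w:=\dim W$, and an integer $m$ with $k-(n-w)\le m\le\min\{k,w\}$. For $H\in\mathrm{Sub}_{k-1}(V)$, $B\in\mathrm{Sub}_{k+1}(V)$, $H\subset B$, the $k$-pencil is $\mathbf p(H,B)=\{U\in\mathrm{Sub}_k(V):H\subset U\subset B\}$; the Grassmann space $\mathbf P_k(V)$ has points $\mathrm{Sub}_k(V)$ and lines the $k$-pencils. The spine space $\mathfrak M$ has point set $S=\{U\in\mathrm{Sub}_k(V):\dim(U\cap W)=m\}$ and line set $\mathcal L=\{\ell\cap S:\ell\text{ a $k$-pencil},\ |\ell\cap S|\ge2\}$; points of $\mathrm{Sub}_k(V)\setminus S$ are improper. Each $L\in\mathcal L$ lies in a unique $k$-pencil $\overline L$; $L$ is projective if $L=\overline L$, affine if $|\overline L\setminus L|=1$. Affine lines are parallel if their closures meet in an improper point. A subspace of $\mathfrak M$ is a set $X\subseteq S$ containing every line that meets it in at least two points; it is strong if its points are pairwise collinear; $\overline X$ denotes the smallest subspace of $\mathbf P_k(V)$ containing $X$. A plane of $\mathbf P_k(V)$ is a set $\{U\in\mathrm{Sub}_k(V):Y\subset U\subset Z\}$ with $(\dim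 Y,\dim Z)=(k-2,k+1)$ or $(k-1,k+2)$; a plane of $\mathfrak M$ is $E=P\cap S$ with $P$ a plane of $\mathbf P_k(V)$, containing two distinct lines; $\overline E=P$, and $E$ is projective, punctured or affine according as $P\setminus E$ is empty, a point, or a line. $L_1\,\boldsymbol\pi\,L_2$ iff some plane contains both lines. For a plane $E$ and $U\in\overline E$, $\mathbf p(U,E)=\{L\in\mathcal L:U\in\overline L\subseteq\overline E\}$ is a pencil of lines if $U\in S$ and a parallel pencil if $U\notin S$; $L_1\,\boldsymbol\rho\,L_2$ iff both belong to a common pencil of lines (proper vertex). A $\delta$-clique is a set of lines pairwise $\delta$-related. A flat is $\mathcal L(E)=\{L\in\mathcal L:L\subseteq E\}$ for a plane $E$; a semiflat on $E$ is the set of all projective lines contained in $E$ together with an inclusion-maximal set of pairwise non-parallel affine lines contained in $E$. For a strong subspace $X$ and $U\in\overline X$, the semibundle is $\mathcal L_U(X)=\{L\in\mathcal L:U\in\overline L,\ L\subseteq X\}$; it is proper if $U\in S$. *)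

theory Defs
  imports Main
begin

text \<open>The vector space V of dimension n over a division ring 'a is modelled as the
  left 'a-vector space of coordinate vectors v :: nat => 'a vanishing from index n on
  (every n-dimensional vector space over 'a is isomorphic to it).\<close>

type_synonym 'a vec = "nat \<Rightarrow> 'a"

definition vspace :: "nat \<Rightarrow> ('a::division_ring) vec set" where
  "vspace n = {v. \<forall>i\<ge>n. v i = 0}"

definition lincomb :: "('a::division_ring vec \<Rightarrow> 'a) \<Rightarrow> 'a vec set \<Rightarrow> 'a vec" where
  "lincomb c S = (\<lambda>i. \<Sum>v\<in>S. c v * v i)"

definition lin_indep :: "('a::division_ring) vec set \<Rightarrow> bool" where
  "lin_indep S \<longleftrightarrow> finite S \<and> (\<forall>c. lincomb c S = (\<lambda>_. 0) \<longrightarrow> (\<forall>v\<in>S. c v = 0))"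

definition span :: "('a::division_ring) vec set \<Rightarrow> 'a vec set" where
  "span S = {lincomb c S | c. True}"

definition is_subspace :: "nat \<Rightarrow> ('a::division_ring) vec set \<Rightarrow> bool" where
  "is_subspace n U \<longleftrightarrow> U \<subseteq> vspace n \<and> (\<lambda>_. 0) \<in> U \<and>
     (\<forall>x\<in>U. \<forall>y\<in>U. (\<lambda>i. x i + y i) \<in> U) \<and> (\<forall>c. \<forall>x\<in>U. (\<lambda>i. c * x i) \<in> U)"

definition has_dim :: "('a::division_ring) vec set \<Rightarrow> nat \<Rightarrow> bool" where
  "has_dim U j \<longleftrightarrow> (\<exists>B. B \<subseteq> U \<and> lin_indep B \<and> card B = j \<and> span B = U)"

definition Sub :: "nat \<Rightarrow> nat \<Rightarrow> ('a::division_ring) vec set set" where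
  "Sub n j = {U. is_subspace n U \<and> has_dim U j}"

definition kpencil :: "nat \<Rightarrow> nat \<Rightarrow> ('a::division_ring) vec set \<Rightarrow> 'a vec set \<Rightarrow> 'a vec set set" where
  "kpencil n k H B = {U \<in> Sub n k. H \<subseteq> U \<and> U \<subseteq> B}"

definition is_kpencil :: "nat \<Rightarrow> nat \<Rightarrow> ('a::division_ring) vec set set \<Rightarrow> bool" where
  "is_kpencil n k l \<longleftrightarrow> (\<exists>H B. H \<in> Sub n (k - 1) \<and> B \<in> Sub n (k + 1) \<and> H \<subseteq> B \<and> l = kpencil n k H B)"

definition kplane :: "nat \<Rightarrow> nat \<Rightarrow> ('a::division_ring) vec set set \<Rightarrow> bool" where
  "kplane n k P \<longleftrightarrow> (\<exists>Y Z. Y \<subseteq> Z \<and>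
      ((Y \<in> Sub n (k - 2) \<and> Z \<in> Sub n (k + 1)) \<or> (Y \<in> Sub n (k - 1) \<and> Z \<in> Sub n (k + 2))) \<and>
      P = {U \<in> Sub n k. Y \<subseteq> U \<and> U \<subseteq> Z})"

definition Pk_subspace :: "nat \<Rightarrow> nat \<Rightarrow> ('a::division_ring) vec set set \<Rightarrow> bool" where
  "Pk_subspace n k Y \<longleftrightarrow> Y \<subseteq> Sub n k \<and>
     (\<forall>l. is_kpencil n k l \<and> (\<exists>a b. a \<noteq> b \<and> a \<in> l \<inter> Y \<and> b \<in> l \<inter> Y) \<longrightarrow> l \<subseteq> Y)"

definition pclos :: "nat \<Rightarrow> nat \<Rightarrow> ('a::division_ring) vec set set \<Rightarrow> 'a vec set set" where
  "pclos n k X = \<Inter>{Y. Pk_subspace n k Y \<and> X \<subseteq> Y}"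

section \<open>Spine space M = M(n,k,W,m)\<close>

definition pts :: "nat \<Rightarrow> nat \<Rightarrow> ('a::division_ring) vec set \<Rightarrow> nat \<Rightarrow> 'a vec set set" where
  "pts n k W m = {U \<in> Sub n k. has_dim (U \<inter> W) m}"

definition lines :: "nat \<Rightarrow> nat \<Rightarrow> ('a::division_ring) vec set \<Rightarrow> nat \<Rightarrow> 'a vec set set set" where
  "lines n k W m = {l \<inter> pts n k W m | l. is_kpencil n k l \<and>
      (\<exists>a b. a \<noteq> b \<and> a \<in> l \<inter> pts n k W m \<and> b \<in> l \<inter> pts n k W m)}"

definition lclos :: "nat \<Rightarrow> nat \<Rightarrow> ('a::division_ring) vec set set \<Rightarrow> 'a vec set set" where
  "lclos n k L = (THE l. is_kpencil n k l \<and> L \<subseteq> l)"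

definition proj_line :: "nat \<Rightarrow> nat \<Rightarrow> ('a::division_ring) vec set \<Rightarrow> nat \<Rightarrow> 'a vec set set \<Rightarrow> bool" where
  "proj_line n k W m L \<longleftrightarrow> L \<in> lines n k W m \<and> L = lclos n k L"

definition aff_line :: "nat \<Rightarrow> nat \<Rightarrow> ('a::division_ring) vec set \<Rightarrow> nat \<Rightarrow> 'a vec set set \<Rightarrow> bool" where
  "aff_line n k W m L \<longleftrightarrow> L \<in> lines n k W m \<and> (\<exists>U. lclos n k L - L = {U})"

definition parallel :: "nat \<Rightarrow> nat \<Rightarrow> ('a::division_ring) vec set \<Rightarrow> nat \<Rightarrow> 'a vec set set \<Rightarrow> 'a vec set set \<Rightarrow> bool" where
  "parallel n k W m L1 L2 \<longleftrightarrow> aff_line n k W m L1 \<and> aff_line n k W m L2 \<and>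
     (\<exists>U. U \<in> lclos n k L1 \<and> U \<in> lclos n k L2 \<and> U \<notin> pts n k W m)"

definition mplane_over :: "nat \<Rightarrow> nat \<Rightarrow> ('a::division_ring) vec set \<Rightarrow> nat \<Rightarrow> 'a vec set set \<Rightarrow> 'a vec set set \<Rightarrow> bool" where
  "mplane_over n k W m P E \<longleftrightarrow> kplane n k P \<and> E = P \<inter> pts n k W m \<and>
     (\<exists>L1 L2. L1 \<in> lines n k W m \<and> L2 \<in> lines n k W m \<and> L1 \<noteq> L2 \<and> L1 \<subseteq> E \<and> L2 \<subseteq> E)"

definition mplane :: "nat \<Rightarrow> nat \<Rightarrow> ('a::division_ring) vec set \<Rightarrow> nat \<Rightarrow> 'a vec set set \<Rightarrow> bool" where
  "mplane n k W m E \<longleftrightarrow> (\<exists>P. mplane_over n k W m P E)"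

definition pi_rel :: "nat \<Rightarrow> nat \<Rightarrow> ('a::division_ring) vec set \<Rightarrow> nat \<Rightarrow> 'a vec set set \<Rightarrow> 'a vec set set \<Rightarrow> bool" where
  "pi_rel n k W m L1 L2 \<longleftrightarrow> L1 \<in> lines n k W m \<and> L2 \<in> lines n k W m \<and>
     (\<exists>E. mplane n k W m E \<and> L1 \<subseteq> E \<and> L2 \<subseteq> E)"

definition line_pencil :: "nat \<Rightarrow> nat \<Rightarrow> ('a::division_ring) vec set \<Rightarrow> nat \<Rightarrow> 'a vec set set \<Rightarrow> 'a vec set \<Rightarrow> 'a vec set set set" where
  "line_pencil n k W m P U = {L \<in> lines n k W m. U \<in> lclos n k L \<and> lclos n k L \<subseteq> P}"

definition rho_rel :: "nat \<Rightarrow> nat \<Rightarrow> ('a::division_ring) vec set \<Rightarrow> nat \<Rightarrow> 'a vec set set \<Rightarrow> 'a vec set set \<Rightarrow> bool" where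
  "rho_rel n k W m L1 L2 \<longleftrightarrow> (\<exists>P E U. mplane_over n k W m P E \<and> U \<in> P \<and> U \<in> pts n k W m \<and>
      L1 \<in> line_pencil n k W m P U \<and> L2 \<in> line_pencil n k W m P U)"

definition clique :: "('b \<Rightarrow> 'b \<Rightarrow> bool) \<Rightarrow> 'b set \<Rightarrow> bool" where
  "clique R C \<longleftrightarrow> (\<forall>L1\<in>C. \<forall>L2\<in>C. L1 \<noteq> L2 \<longrightarrow> R L1 L2)"

definition flat :: "nat \<Rightarrow> nat \<Rightarrow> ('a::division_ring) vec set \<Rightarrow> nat \<Rightarrow> 'a vec set set \<Rightarrow> 'a vec set set set" where
  "flat n k W m E = {L \<in> lines n k W m. L \<subseteq> E}"

definition nonpar_aff :: "nat \<Rightarrow> nat \<Rightarrow> ('a::division_ring) vec set \<Rightarrow> nat \<Rightarrow> 'a vec set set \<Rightarrow> 'a vec set set set \<Rightarrow> bool" where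
  "nonpar_aff n k W m E A \<longleftrightarrow> (\<forall>L\<in>A. aff_line n k W m L \<and> L \<subseteq> E) \<and>
     (\<forall>L1\<in>A. \<forall>L2\<in>A. L1 \<noteq> L2 \<longrightarrow> \<not> parallel n k W m L1 L2)"

definition semiflat_on :: "nat \<Rightarrow> nat \<Rightarrow> ('a::division_ring) vec set \<Rightarrow> nat \<Rightarrow> 'a vec set set \<Rightarrow> 'a vec set set set \<Rightarrow> bool" where
  "semiflat_on n k W m E F \<longleftrightarrow> mplane n k W m E \<and>
     (\<exists>A. nonpar_aff n k W m E A \<and> (\<forall>A'. nonpar_aff n k W m E A' \<and> A \<subseteq> A' \<longrightarrow> A' = A) \<and>
          F = {L \<in> lines n k W m. proj_line n k W m L \<and> L \<subseteq> E} \<union> A)"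

definition M_subspace :: "nat \<Rightarrow> nat \<Rightarrow> ('a::division_ring) vec set \<Rightarrow> nat \<Rightarrow> 'a vec set set \<Rightarrow> bool" where
  "M_subspace n k W m X \<longleftrightarrow> X \<subseteq> pts n k W m \<and>
     (\<forall>L\<in>lines n k W m. (\<exists>a b. a \<noteq> b \<and> a \<in> L \<inter> X \<and> b \<in> L \<inter> X) \<longrightarrow> L \<subseteq> X)"

definition strong_subspace :: "nat \<Rightarrow> nat \<Rightarrow> ('a::division_ring) vec set \<Rightarrow> nat \<Rightarrow> 'a vec set set \<Rightarrow> bool" where
  "strong_subspace n k W m X \<longleftrightarrow> M_subspace n k W m X \<and>
     (\<forall>a\<in>X. \<forall>b\<in>X. a \<noteq> b \<longrightarrow> (\<exists>L\<in>lines n k W m. a \<in> L \<and> b \<in> L))"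

definition semibundle :: "nat \<Rightarrow> nat \<Rightarrow> ('a::division_ring) vec set \<Rightarrow> nat \<Rightarrow> 'a vec set set \<Rightarrow> 'a vec set \<Rightarrow> 'a vec set set set" where
  "semibundle n k W m X U = {L \<in> lines n k W m. U \<in> lclos n k L \<and> L \<subseteq> X}"

end

theory Submission
  imports Defs
begin


lemma lincomb_insert: "finite S \<Longrightarrow> x \<notin> S \<Longrightarrow> lincomb c (insert x S) = (\<lambda>i. c x * x i + lincomb c S i)"
  by (simp add: lincomb_def)

lemma lincomb_app: "lincomb c S i = (\<Sum>v\<in>S. c v * v i)" by (simp add: lincomb_def)

lemma span_sub:
  assumes "finite S" "S \<subseteq> A" "is_subspace n A"
  shows "span S \<subseteq> A"
proof -
  have "lincomb c S \<in> A" for c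
    using assms(1,2)
  proof (induction S rule: finite_induct)
    case empty then show ?case using assms(3) by (simp add: is_subspace_def lincomb_def)
  next
    case (insert x S)
    have "x \<in> A" using insert by auto
    then have 1: "(\<lambda>i. c x * x i) \<in> A" using assms(3) by (simp add: is_subspace_def)
    have 2: "lincomb c S \<in> A" using insert by simp
    have "\<forall>x\<in>A. \<forall>y\<in>A. (\<lambda>i. x i + y i) \<in> A" using assms(3) unfolding is_subspace_def by simp
    from bspec[OF bspec[OF this 1] 2] have "(\<lambda>i. (\<lambda>i. c x * x i) i + lincomb c S i) \<in> A" .
    then show ?case using insert by (simp add: lincomb_insert)
  qed
  then show ?thesis by (auto simp: span_def)
qed

lemma mem_span: assumes "finite S" "v \<in> S" shows "v \<in> span S"
proof -
  have "lincomb (\<lambda>w. if w = v then 1 else 0) S = v"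
  proof
    fix i
    have "lincomb (\<lambda>w. if w = v then 1 else 0) S i = (\<Sum>w\<in>S. if w = v then v i else 0)"
      unfolding lincomb_def by (rule sum.cong) auto
    also have "\<dots> = v i" using assms by simp
    finally show "lincomb (\<lambda>w. if w = v then 1 else 0) S i = v i" .
  qed
  then show ?thesis unfolding span_def by (metis (mono_tags, lifting) mem_Collect_eq)
qed

lemma steinitz_family:
  fixes S :: "('a::division_ring) vec set"
  assumes "finite S"
  shows "\<And>(I::'b set) t. finite I \<Longrightarrow> card S < card I \<Longrightarrow> (\<forall>j\<in>I. t j \<in> span S) \<Longrightarrow>
     \<exists>c. (\<exists>j\<in>I. c j \<noteq> 0) \<and> (\<forall>i. (\<Sum>j\<in>I. c j * t j i) = 0)"
  using assms
proof (induction S rule: finite_induct)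
  case empty
  then have "I \<noteq> {}" by auto
  then obtain j0 where j0: "j0 \<in> I" by blast
  have "\<forall>j\<in>I. t j = (\<lambda>_. 0)" using empty by (auto simp: span_def lincomb_def)
  then have "\<forall>i. (\<Sum>j\<in>I. (\<lambda>j. if j = j0 then 1 else (0::'a)) j * t j i) = 0" by simp
  then show ?case using j0 by (intro exI[of _ "\<lambda>j. if j = j0 then 1 else 0"]) auto
next
  case (insert s S I t)
  have "\<forall>j\<in>I. \<exists>C. t j = lincomb C (insert s S)" using insert.prems by (auto simp: span_def)
  then obtain Cf where Cf: "\<forall>j\<in>I. t j = lincomb (Cf j) (insert s S)" by metis
  have tj: "t j i = Cf j s * s i + lincomb (Cf j) S i" if "j \<in> I" for j i
    using Cf that insert.hyps by (simp add: lincomb_insert)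
  show ?case
  proof (cases "\<forall>j\<in>I. Cf j s = 0")
    case True
    have "\<forall>j\<in>I. t j \<in> span S"
    proof
      fix j assume "j \<in> I"
      then have "t j = lincomb (Cf j) S" using tj True by auto
      then show "t j \<in> span S" by (auto simp: span_def)
    qed
    moreover have "card S < card I" using insert by simp
    ultimately show ?thesis using insert.IH[of I t] insert.prems by blast
  next
    case False
    then obtain j0 where j0: "j0 \<in> I" "Cf j0 s \<noteq> 0" by blast
    define f0 where "f0 = Cf j0 s"
    define k where "k j = Cf j s * inverse f0" for j
    define t' where "t' j = (\<lambda>i. t j i - k j * t j0 i)" for j
    have kf: "k j * f0 = Cf j s" for j
      using j0 unfolding k_def f0_def by (simp add: mult.assoc)
    have "\<forall>j\<in>I - {j0}. t' j \<in> span S"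
    proof
      fix j assume jI: "j \<in> I - {j0}"
      have "t' j = lincomb (\<lambda>v. Cf j v - k j * Cf j0 v) S"
      proof
        fix i
        have "t' j i = (Cf j s * s i + lincomb (Cf j) S i) - k j * (f0 * s i + lincomb (Cf j0) S i)"
          using jI j0 by (simp add: t'_def tj f0_def)
        also have "\<dots> = lincomb (Cf j) S i - k j * lincomb (Cf j0) S i"
        proof -
          have "k j * (f0 * s i) = Cf j s * s i" by (simp add: kf flip: mult.assoc)
          then show ?thesis by (simp add: distrib_left right_diff_distrib)
        qed
        also have "\<dots> = lincomb (\<lambda>v. Cf j v - k j * Cf j0 v) S i"
          by (simp add: lincomb_def left_diff_distrib mult.assoc sum_subtractf sum_distrib_left)
        finally show "t' j i = lincomb (\<lambda>v. Cf j v - k j * Cf j0 v) S i" .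
      qed
      then show "t' j \<in> span S" by (auto simp: span_def)
    qed
    moreover have "card S < card (I - {j0})" using insert j0 by simp
    moreover have "finite (I - {j0})" using insert by simp
    ultimately obtain c where c: "\<exists>j\<in>I - {j0}. c j \<noteq> 0" "\<forall>i. (\<Sum>j\<in>I - {j0}. c j * t' j i) = 0"
      using insert.IH[of "I - {j0}" t'] by blast
    define d where "d j = (if j = j0 then - (\<Sum>j\<in>I - {j0}. c j * k j) else c j)" for j
    have "(\<Sum>j\<in>I. d j * t j i) = 0" for i
    proof -
      define X where "X = (\<Sum>j\<in>I - {j0}. c j * k j)"
      define Y where "Y = (\<Sum>j\<in>I - {j0}. c j * t j i)"
      have A: "(\<Sum>j\<in>I. d j * t j i) = d j0 * t j0 i + (\<Sum>j\<in>I - {j0}. d j * t j i)"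
        using j0 insert.prems by (simp add: sum.remove)
      have A2: "(\<Sum>j\<in>I - {j0}. d j * t j i) = Y"
        unfolding Y_def by (rule sum.cong) (auto simp: d_def)
      have B: "(\<Sum>j\<in>I - {j0}. c j * t' j i) = Y - X * t j0 i"
        unfolding X_def Y_def t'_def
        by (simp add: right_diff_distrib sum_subtractf sum_distrib_right mult.assoc)
      have C: "(\<Sum>j\<in>I - {j0}. c j * t' j i) = 0" using c by simp
      have "Y = X * t j0 i" using B C by simp
      moreover have "d j0 = - X" by (simp add: d_def X_def)
      ultimately show ?thesis using A A2 by simp
    qed
    moreover have "\<exists>j\<in>I. d j \<noteq> 0" using c(1) by (auto simp: d_def)
    ultimately show ?thesis by (intro exI[of _ d]) auto
  qed
qed



lemma lin_indep_finite: "lin_indep S \<Longrightarrow> finite S" by (simp add: lin_indep_def)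

lemma steinitz:
  assumes "lin_indep T" "finite S" "T \<subseteq> span S"
  shows "card T \<le> card S"
proof (rule ccontr)
  assume "\<not> ?thesis"
  then have "card S < card T" by simp
  moreover have "finite T" using assms(1) by (simp add: lin_indep_def)
  moreover have "\<forall>j\<in>T. (\<lambda>x. x) j \<in> span S" using assms(3) by auto
  ultimately obtain c where c: "\<exists>j\<in>T. c j \<noteq> 0" "\<forall>i. (\<Sum>j\<in>T. c j * j i) = 0"
    using steinitz_family[OF assms(2), of T "\<lambda>x. x"] by auto
  have "lincomb c T = (\<lambda>_. 0)" using c(2) by (simp add: lincomb_def)
  then have "\<forall>v\<in>T. c v = 0" using assms(1) by (simp add: lin_indep_def)
  then show False using c(1) by blast
qed

lemma indep_insert:
  assumes "lin_indep S" "x \<notin> span S"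
  shows "lin_indep (insert x S)"
proof -
  have fin: "finite S" using assms(1) by (simp add: lin_indep_def)
  have xS: "x \<notin> S" using assms(2) mem_span[OF fin] by blast
  show ?thesis unfolding lin_indep_def
  proof (intro conjI allI impI)
    show "finite (insert x S)" using fin by simp
    fix c assume lc: "lincomb c (insert x S) = (\<lambda>_. 0)"
    then have eq: "c x * x i + lincomb c S i = 0" for i
      using fin xS by (metis lincomb_insert)
    have cx: "c x = 0"
    proof (rule ccontr)
      assume ne: "c x \<noteq> 0"
      have "x i = lincomb (\<lambda>v. - (inverse (c x) * c v)) S i" for i
      proof -
        have "c x * x i = - lincomb c S i" using eq[of i] by (simp add: eq_neg_iff_add_eq_0)
        then have "inverse (c x) * (c x * x i) = inverse (c x) * (- lincomb c S i)" by simp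
        then have "x i = - (inverse (c x) * lincomb c S i)" using ne by (simp add: mult.assoc[symmetric])
        then show ?thesis by (simp add: lincomb_def sum_distrib_left mult.assoc sum_negf)
      qed
      then have "x = lincomb (\<lambda>v. - (inverse (c x) * c v)) S" by blast
      then have "x \<in> span S" unfolding span_def by blast
      then show False using assms(2) by blast
    qed
    have "lincomb c S = (\<lambda>_. 0)" using eq cx by auto
    then have "\<forall>v\<in>S. c v = 0" using assms(1) by (simp add: lin_indep_def)
    then show "\<forall>v\<in>insert x S. c v = 0" using cx by simp
  qed
qed

definition uvec :: "nat \<Rightarrow> ('a::division_ring) vec" where
  "uvec j = (\<lambda>i. if i = j then 1 else 0)"

lemma uvec_inj: "inj_on (uvec :: nat \<Rightarrow> ('a::division_ring) vec) A"
proof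
  fix j j' assume "(uvec j :: 'a vec) = uvec j'"
  then have "(uvec j :: 'a vec) j = uvec j' j" by simp
  then show "j = j'" by (simp add: uvec_def split: if_splits)
qed

lemma vspace_span: "vspace n \<subseteq> span (uvec ` {..<n} :: ('a::division_ring) vec set)"
proof
  fix v :: "'a vec" assume v: "v \<in> vspace n"
  define c where "c w = v (inv_into {..<n} uvec w)" for w :: "'a vec"
  have "lincomb c (uvec ` {..<n}) = v"
  proof
    fix i
    have "lincomb c (uvec ` {..<n}) i = (\<Sum>j<n. c (uvec j) * uvec j i)"
      unfolding lincomb_def by (simp add: sum.reindex[OF uvec_inj])
    also have "\<dots> = (\<Sum>j<n. v j * uvec j i)"
      by (rule sum.cong) (auto simp: c_def inv_into_f_f[OF uvec_inj])
    also have "\<dots> = (\<Sum>j<n. if i = j then v i else 0)"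
      by (rule sum.cong) (auto simp: uvec_def)
    also have "\<dots> = v i" using v by (simp add: vspace_def)
    finally show "lincomb c (uvec ` {..<n}) i = v i" .
  qed
  then show "v \<in> span (uvec ` {..<n})" unfolding span_def by blast
qed

lemma indep_card_le:
  assumes "lin_indep B" "B \<subseteq> vspace n"
  shows "card B \<le> n"
proof -
  have "card B \<le> card (uvec ` {..<n} :: ('a::division_ring) vec set)"
    using steinitz[OF assms(1)] vspace_span assms(2) by (metis finite_imageI finite_lessThan subset_trans)
  also have "\<dots> \<le> n" using card_image_le[of "{..<n}" uvec] by simp
  finally show ?thesis .
qed

lemma basis_exists:
  assumes "is_subspace n (A :: ('a::division_ring) vec set)"
  shows "\<exists>j. has_dim A j"
proof -
  let ?K = "card ` {B. B \<subseteq> A \<and> lin_indep B}"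
  have Av: "A \<subseteq> vspace n" using assms by (simp add: is_subspace_def)
  have "?K \<subseteq> {..n}" using indep_card_le Av by fastforce
  then have finK: "finite ?K" using finite_subset by blast
  have "lin_indep ({} :: 'a vec set)" by (simp add: lin_indep_def)
  then have "0 \<in> ?K" by force
  then have "Max ?K \<in> ?K" using finK by (metis Max_in empty_iff)
  then obtain B where B: "B \<subseteq> A" "lin_indep B" "card B = Max ?K" by auto
  have finB: "finite B" using B(2) by (simp add: lin_indep_def)
  have "span B = A"
  proof
    show "span B \<subseteq> A" using span_sub[OF finB B(1) assms] .
    show "A \<subseteq> span B"
    proof
      fix x assume xA: "x \<in> A"
      show "x \<in> span B"
      proof (rule ccontr)
        assume nx: "x \<notin> span B"
        then have "lin_indep (insert x B)" using indep_insert B(2) by blast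
        moreover have "insert x B \<subseteq> A" using xA B(1) by simp
        ultimately have "card (insert x B) \<in> ?K" by blast
        then have "card (insert x B) \<le> Max ?K" using finK by simp
        moreover have "x \<notin> B" using nx mem_span[OF finB] by blast
        ultimately show False using B(3) finB by simp
      qed
    qed
  qed
  then show ?thesis unfolding has_dim_def using B by blast
qed

lemma dim_mono:
  assumes "has_dim A j" "has_dim C j'" "A \<subseteq> C"
  shows "j \<le> j'"
proof -
  obtain BA where BA: "BA \<subseteq> A" "lin_indep BA" "card BA = j" "span BA = A" using assms(1) has_dim_def by blast
  obtain BC where BC: "BC \<subseteq> C" "lin_indep BC" "card BC = j'" "span BC = C" using assms(2) has_dim_def by blast
  have "card BA \<le> card BC" using steinitz[OF BA(2)] BC BA(1) assms(3) lin_indep_finite by blast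
  then show ?thesis using BA BC by simp
qed

lemma dim_strict:
  assumes "has_dim A j" "has_dim C j'" "A \<subset> C"
  shows "j < j'"
proof -
  obtain BA where BA: "BA \<subseteq> A" "lin_indep BA" "card BA = j" "span BA = A" using assms(1) has_dim_def by blast
  obtain BC where BC: "BC \<subseteq> C" "lin_indep BC" "card BC = j'" "span BC = C" using assms(2) has_dim_def by blast
  obtain x where x: "x \<in> C" "x \<notin> A" using assms(3) by blast
  have finA: "finite BA" using BA(2) lin_indep_finite by blast
  have "lin_indep (insert x BA)" using indep_insert[OF BA(2)] x BA(4) by simp
  moreover have "insert x BA \<subseteq> span BC" using BC(4) x BA(1) assms(3) by auto
  ultimately have "card (insert x BA) \<le> card BC" using steinitz BC(2) lin_indep_finite by blast
  moreover have "x \<notin> BA" using x BA(1) by blast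
  ultimately show ?thesis using BA BC finA by simp
qed

lemma dim_eq: "has_dim A j \<Longrightarrow> has_dim C j \<Longrightarrow> A \<subseteq> C \<Longrightarrow> A = C"
  using dim_strict by blast

lemma dim_unique: "has_dim A j \<Longrightarrow> has_dim A j' \<Longrightarrow> j = j'"
  using dim_mono by (meson order_antisym subset_refl)

lemma between_top:
  assumes "is_subspace n M" "has_dim A j" "has_dim C (Suc j)" "A \<subset> M" "M \<subseteq> C"
  shows "M = C"
proof -
  obtain d where d: "has_dim M d" using basis_exists[OF assms(1)] by blast
  have "j < d" using dim_strict[OF assms(2) d assms(4)] .
  moreover have "d \<le> Suc j" using dim_mono[OF d assms(3) assms(5)] .
  ultimately have "d = Suc j" by simp
  then show ?thesis using dim_eq d assms(3,5) by blast
qed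

lemma between_bot:
  assumes "is_subspace n M" "has_dim A j" "has_dim C (Suc j)" "A \<subseteq> M" "M \<subset> C"
  shows "M = A"
proof -
  obtain d where d: "has_dim M d" using basis_exists[OF assms(1)] by blast
  have "d < Suc j" using dim_strict[OF d assms(3) assms(5)] .
  moreover have "j \<le> d" using dim_mono[OF assms(2) d assms(4)] .
  ultimately have "d = j" by simp
  then show ?thesis using dim_eq d assms(2,4) by metis
qed



lemma sub_add: "is_subspace n A \<Longrightarrow> a \<in> A \<Longrightarrow> b \<in> A \<Longrightarrow> (\<lambda>i. a i + b i) \<in> A"
  unfolding is_subspace_def by blast
lemma sub_smul: "is_subspace n A \<Longrightarrow> a \<in> A \<Longrightarrow> (\<lambda>i. c * a i) \<in> A"
  unfolding is_subspace_def by blast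
lemma sub_zero: "is_subspace n A \<Longrightarrow> (\<lambda>_. 0) \<in> A"
  unfolding is_subspace_def by blast
lemma sub_vspace: "is_subspace n A \<Longrightarrow> A \<subseteq> vspace n"
  unfolding is_subspace_def by blast
lemma sub_lin: "is_subspace n A \<Longrightarrow> a \<in> A \<Longrightarrow> b \<in> A \<Longrightarrow> (\<lambda>i. a i + c * b i) \<in> A"
proof -
  assume A: "is_subspace n A" "a \<in> A" "b \<in> A"
  have "(\<lambda>i. c * b i) \<in> A" using sub_smul A by blast
  from sub_add[OF A(1) A(2) this] show ?thesis by simp
qed
lemma sub_inter: "is_subspace n A \<Longrightarrow> is_subspace n C \<Longrightarrow> is_subspace n (A \<inter> C)"
  unfolding is_subspace_def by blast

definition extv :: "('a::division_ring) vec set \<Rightarrow> 'a vec \<Rightarrow> 'a vec set" where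
  "extv A x = {v. \<exists>a\<in>A. \<exists>c. v = (\<lambda>i. a i + c * x i)}"

lemma extvI: "a \<in> A \<Longrightarrow> v = (\<lambda>i. a i + c * x i) \<Longrightarrow> v \<in> extv A x"
  unfolding extv_def by blast

lemma extv_subspace:
  assumes "is_subspace n A" "x \<in> vspace n"
  shows "is_subspace n (extv A x)"
  unfolding is_subspace_def
proof (intro conjI ballI allI)
  show "extv A x \<subseteq> vspace n"
  proof
    fix v assume "v \<in> extv A x"
    then obtain a c where "a \<in> A" "v = (\<lambda>i. a i + c * x i)" unfolding extv_def by blast
    then show "v \<in> vspace n" using assms sub_vspace by (fastforce simp: vspace_def)
  qed
  show "(\<lambda>_. 0) \<in> extv A x" unfolding extv_def using sub_zero[OF assms(1)]
    by (intro CollectI bexI[of _ "\<lambda>_. 0"] exI[of _ 0]) auto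
  fix v w assume "v \<in> extv A x" "w \<in> extv A x"
  then obtain a c b d where ab: "a \<in> A" "v = (\<lambda>i. a i + c * x i)" "b \<in> A" "w = (\<lambda>i. b i + d * x i)"
    unfolding extv_def by blast
  have "(\<lambda>i. a i + b i) \<in> A" using sub_add assms(1) ab by blast
  moreover have "(\<lambda>i. v i + w i) = (\<lambda>i. (\<lambda>i. a i + b i) i + (c + d) * x i)"
    using ab by (auto simp: algebra_simps)
  ultimately show "(\<lambda>i. v i + w i) \<in> extv A x" by (rule extvI)
next
  fix e v assume "v \<in> extv A x"
  then obtain a c where ab: "a \<in> A" "v = (\<lambda>i. a i + c * x i)" unfolding extv_def by blast
  have "(\<lambda>i. e * a i) \<in> A" using sub_smul assms(1) ab by blast
  moreover have "(\<lambda>i. e * v i) = (\<lambda>i. (\<lambda>i. e * a i) i + (e * c) * x i)"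
    using ab by (auto simp: algebra_simps)
  ultimately show "(\<lambda>i. e * v i) \<in> extv A x" by (rule extvI)
qed

lemma extv_sup: "A \<subseteq> extv A x"
proof
  fix a assume "a \<in> A"
  moreover have "a = (\<lambda>i. a i + 0 * x i)" by simp
  ultimately show "a \<in> extv A x" unfolding extv_def by blast
qed

lemma extv_x: "is_subspace n A \<Longrightarrow> x \<in> extv A x"
proof -
  assume "is_subspace n A"
  then have "(\<lambda>_. 0) \<in> A" by (rule sub_zero)
  moreover have "x = (\<lambda>i. (\<lambda>_. 0) i + 1 * x i)" by simp
  ultimately show ?thesis by (rule extvI)
qed

lemma extv_min:
  assumes "is_subspace n S" "A \<subseteq> S" "x \<in> S"
  shows "extv A x \<subseteq> S"
proof
  fix v assume "v \<in> extv A x"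
  then obtain a c where ab: "a \<in> A" "v = (\<lambda>i. a i + c * x i)" unfolding extv_def by blast
  then show "v \<in> S" using sub_lin[OF assms(1), of a x c] assms by auto
qed

lemma extv_dim:
  assumes "has_dim A j" "x \<notin> A"
  shows "has_dim (extv A x) (Suc j)"
proof -
  obtain B where B: "B \<subseteq> A" "lin_indep B" "card B = j" "span B = A" using assms(1) has_dim_def by blast
  have finB: "finite B" using B(2) lin_indep_finite by blast
  have xB: "x \<notin> B" using B(1) assms(2) by blast
  have ind: "lin_indep (insert x B)" using indep_insert[OF B(2)] assms(2) B(4) by simp
  have sp: "span (insert x B) = extv A x"
  proof
    show "span (insert x B) \<subseteq> extv A x"
    proof
      fix v assume "v \<in> span (insert x B)"
      then obtain c where "v = lincomb c (insert x B)" unfolding span_def by blast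
      then have "v = (\<lambda>i. lincomb c B i + c x * x i)" using lincomb_insert[OF finB xB] by (simp add: add.commute)
      moreover have "lincomb c B \<in> A" using B(4) unfolding span_def by blast
      ultimately show "v \<in> extv A x" unfolding extv_def by blast
    qed
    show "extv A x \<subseteq> span (insert x B)"
    proof
      fix v assume "v \<in> extv A x"
      then obtain a c where ab: "a \<in> A" "v = (\<lambda>i. a i + c * x i)" unfolding extv_def by blast
      then obtain d where d: "a = lincomb d B" using B(4) unfolding span_def by blast
      have "lincomb (d(x := c)) B = lincomb d B"
        unfolding lincomb_def using xB by (intro ext sum.cong) auto
      then have "lincomb (d(x := c)) (insert x B) = v"
        using lincomb_insert[OF finB xB, of "d(x := c)"] ab d by (auto simp: add.commute)
      then show "v \<in> span (insert x B)" unfolding span_def by blast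
    qed
  qed
  have "insert x B \<subseteq> extv A x" using sp mem_span finB by (metis finite_insert subsetI)
  then show ?thesis unfolding has_dim_def using ind sp B(3) finB xB
    by (intro exI[of _ "insert x B"]) simp
qed

lemma meet_dim:
  assumes sA: "is_subspace n A" and sC: "is_subspace n C" and sD: "is_subspace n D"
    and dA: "has_dim A (Suc j)" and dC: "has_dim C (Suc j)" and dD: "has_dim D (Suc (Suc j))"
    and ne: "A \<noteq> C" and AD: "A \<subseteq> D" and CD: "C \<subseteq> D"
  shows "has_dim (A \<inter> C) j"
proof -
  have "\<not> A \<subseteq> C" using dim_eq dA dC ne by blast
  then obtain x where x: "x \<in> A" "x \<notin> C" by blast
  have xv: "x \<in> vspace n" using x sub_vspace[OF sA] by blast
  have "extv C x \<subseteq> D" using extv_min[OF sD CD] x AD by blast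
  moreover have "has_dim (extv C x) (Suc (Suc j))" using extv_dim[OF dC x(2)] .
  ultimately have eD: "extv C x = D" using dim_eq dD by blast
  have sY: "is_subspace n (A \<inter> C)" using sub_inter sA sC by blast
  obtain d where d: "has_dim (A \<inter> C) d" using basis_exists[OF sY] by blast
  have "A \<subseteq> extv (A \<inter> C) x"
  proof
    fix h assume h: "h \<in> A"
    then have "h \<in> extv C x" using eD AD by blast
    then obtain a c where ac: "a \<in> C" "h = (\<lambda>i. a i + c * x i)" unfolding extv_def by blast
    have "a = (\<lambda>i. h i + (- c) * x i)" using ac by auto
    moreover have "(\<lambda>i. h i + (- c) * x i) \<in> A" using sub_lin[OF sA h x(1)] .
    ultimately have "a \<in> A \<inter> C" using ac by auto
    then show "h \<in> extv (A \<inter> C) x" using ac unfolding extv_def by blast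
  qed
  moreover have "has_dim (extv (A \<inter> C) x) (Suc d)" using extv_dim[OF d] x by blast
  ultimately have "Suc j \<le> Suc d" using dim_mono dA by blast
  moreover have "A \<inter> C \<subset> A" using x by blast
  then have "d < Suc j" using dim_strict d dA by blast
  ultimately show ?thesis using d by (metis Suc_le_mono le_antisym less_Suc_eq_le)
qed

lemma join_dim:
  assumes sA: "is_subspace n A" and sC: "is_subspace n C" and sK: "is_subspace n K"
    and dA: "has_dim A (Suc j)" and dC: "has_dim C (Suc j)" and dK: "has_dim K j"
    and ne: "A \<noteq> C" and KA: "K \<subseteq> A" and KC: "K \<subseteq> C"
  shows "\<exists>D. is_subspace n D \<and> has_dim D (Suc (Suc j)) \<and> A \<subseteq> D \<and> C \<subseteq> D \<and>
     (\<forall>S. is_subspace n S \<and> A \<subseteq> S \<and> C \<subseteq> S \<longrightarrow> D \<subseteq> S)"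
proof -
  have "\<not> C \<subseteq> A" using dim_eq dA dC ne by metis
  then obtain y where y: "y \<in> C" "y \<notin> A" by blast
  have yv: "y \<in> vspace n" using y sub_vspace[OF sC] by blast
  let ?D = "extv A y"
  have sD: "is_subspace n ?D" using extv_subspace[OF sA yv] .
  have dD: "has_dim ?D (Suc (Suc j))" using extv_dim[OF dA y(2)] .
  have "K \<subset> C \<inter> ?D" using KC KA extv_sup[of A y] extv_x[OF sA, of y] y by blast
  then have "C \<inter> ?D = C" using between_top[OF sub_inter[OF sC sD] dK dC] by blast
  then have "C \<subseteq> ?D" by blast
  moreover have "\<forall>S. is_subspace n S \<and> A \<subseteq> S \<and> C \<subseteq> S \<longrightarrow> ?D \<subseteq> S"
    using extv_min y by blast
  ultimately show ?thesis using sD dD extv_sup by blast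
qed



lemma Sub_iff: "U \<in> Sub n j \<longleftrightarrow> is_subspace n U \<and> has_dim U j"
  by (simp add: Sub_def)

lemma kpencil_iff: "U \<in> kpencil n k H B \<longleftrightarrow> U \<in> Sub n k \<and> H \<subseteq> U \<and> U \<subseteq> B"
  by (simp add: kpencil_def)

lemma pencil_H:
  assumes "H \<in> Sub n (k-1)" "a \<in> Sub n k" "b \<in> Sub n k" "a \<noteq> b" "H \<subseteq> a" "H \<subseteq> b" "1 \<le> k"
  shows "H = a \<inter> b"
proof -
  have da: "has_dim a (Suc (k-1))" using assms by (simp add: Sub_iff)
  have "\<not> a \<subseteq> b" using dim_eq assms(2,3,4) by (metis Sub_iff)
  then have "a \<inter> b \<subset> a" by blast
  then show ?thesis using between_bot[of n "a \<inter> b" H "k-1" a] assms da sub_inter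
    by (metis Int_greatest Sub_iff)
qed

lemma pencil_B:
  assumes "B \<in> Sub n (k+1)" "a \<in> Sub n k" "b \<in> Sub n k" "a \<noteq> b" "a \<subseteq> B" "b \<subseteq> B"
    "is_subspace n Z" "a \<subseteq> Z" "b \<subseteq> Z"
  shows "B \<subseteq> Z"
proof -
  have "\<not> b \<subseteq> a" using dim_eq assms(2,3,4) by (metis Sub_iff)
  then have "a \<subset> B \<inter> Z" using assms by blast
  moreover have "is_subspace n (B \<inter> Z)" using sub_inter assms Sub_iff by blast
  moreover have "has_dim B (Suc k)" using assms(1) by (simp add: Sub_iff)
  ultimately have "B \<inter> Z = B" using between_top[of n "B \<inter> Z" a k B] assms(2) by (simp add: Sub_iff)
  then show ?thesis by blast
qed

lemma pencil_unique:
  assumes "is_kpencil n k l1" "is_kpencil n k l2" "a \<noteq> b" "a \<in> l1" "b \<in> l1" "a \<in> l2" "b \<in> l2" "1 \<le> k"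
  shows "l1 = l2"
proof -
  obtain H1 B1 where 1: "H1 \<in> Sub n (k - 1)" "B1 \<in> Sub n (k + 1)" "H1 \<subseteq> B1" "l1 = kpencil n k H1 B1"
    using assms(1) is_kpencil_def by blast
  obtain H2 B2 where 2: "H2 \<in> Sub n (k - 1)" "B2 \<in> Sub n (k + 1)" "H2 \<subseteq> B2" "l2 = kpencil n k H2 B2"
    using assms(2) is_kpencil_def by blast
  have ab: "a \<in> Sub n k" "b \<in> Sub n k" "H1 \<subseteq> a" "H1 \<subseteq> b" "a \<subseteq> B1" "b \<subseteq> B1"
     "H2 \<subseteq> a" "H2 \<subseteq> b" "a \<subseteq> B2" "b \<subseteq> B2"
    using assms 1 2 by (auto simp: kpencil_iff)
  have "H1 = H2" using pencil_H[OF 1(1) ab(1,2) assms(3)] pencil_H[OF 2(1) ab(1,2) assms(3)] ab assms(8) by simp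
  moreover have "B1 \<subseteq> B2" using pencil_B[OF 1(2) ab(1,2) assms(3)] ab 2(2) by (simp add: Sub_iff)
  moreover have "B2 \<subseteq> B1" using pencil_B[OF 2(2) ab(1,2) assms(3)] ab 1(2) by (simp add: Sub_iff)
  ultimately show ?thesis using 1 2 by simp
qed

lemma line_props:
  assumes "L \<in> lines n k W m" "1 \<le> k"
  shows "is_kpencil n k (lclos n k L) \<and> L = lclos n k L \<inter> pts n k W m \<and> L \<subseteq> lclos n k L
      \<and> (\<exists>a b. a \<noteq> b \<and> a \<in> L \<and> b \<in> L)"
proof -
  obtain l where l: "L = l \<inter> pts n k W m" "is_kpencil n k l"
     "\<exists>a b. a \<noteq> b \<and> a \<in> l \<inter> pts n k W m \<and> b \<in> l \<inter> pts n k W m"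
    using assms(1) unfolding lines_def by blast
  obtain a b where ab: "a \<noteq> b" "a \<in> L" "b \<in> L" using l by blast
  have "lclos n k L = l" unfolding lclos_def
  proof (rule the_equality)
    show "is_kpencil n k l \<and> L \<subseteq> l" using l by blast
    fix l' assume "is_kpencil n k l' \<and> L \<subseteq> l'"
    then show "l' = l" using pencil_unique[of n k l' l a b] l ab assms(2) by blast
  qed
  then show ?thesis using l ab by blast
qed

lemma two_pencils_plane:
  assumes k: "1 < k"
    and p1: "H1 \<in> Sub n (k-1)" "B1 \<in> Sub n (k+1)" "H1 \<subseteq> B1"
    and p2: "H2 \<in> Sub n (k-1)" "B2 \<in> Sub n (k+1)" "H2 \<subseteq> B2"
    and U: "U \<in> kpencil n k H1 B1" "U \<in> kpencil n k H2 B2"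
    and ne: "kpencil n k H1 B1 \<noteq> kpencil n k H2 B2"
    and alt: "H1 = H2 \<or> B1 = B2"
  shows "\<exists>P. kplane n k P \<and> kpencil n k H1 B1 \<subseteq> P \<and> kpencil n k H2 B2 \<subseteq> P"
proof (cases "H1 = H2")
  case True
  then have Bne: "B1 \<noteq> B2" using ne by auto
  have Us: "is_subspace n U" "has_dim U k" "U \<subseteq> B1" "U \<subseteq> B2" using U by (auto simp: kpencil_iff Sub_iff)
  obtain D where D: "is_subspace n D" "has_dim D (Suc (Suc k))" "B1 \<subseteq> D" "B2 \<subseteq> D"
    using join_dim[of n B1 B2 U k] p1 p2 Us Bne by (auto simp: Sub_iff)
  define P where "P = {V \<in> Sub n k. H1 \<subseteq> V \<and> V \<subseteq> D}"
  have "kplane n k P" unfolding kplane_def P_def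
    using p1 D by (intro exI[of _ H1] exI[of _ D]) (auto simp: Sub_iff)
  moreover have "kpencil n k H1 B1 \<subseteq> P" "kpencil n k H2 B2 \<subseteq> P"
    using D True unfolding P_def kpencil_def by blast+
  ultimately show ?thesis by blast
next
  case False
  then have Beq: "B1 = B2" using alt by simp
  have Us: "is_subspace n U" "has_dim U (Suc (Suc (k-2)))" "H1 \<subseteq> U" "H2 \<subseteq> U"
    using U k by (auto simp: kpencil_iff Sub_iff Suc_diff_Suc numeral_2_eq_2)
  have e: "k - 1 = Suc (k-2)" using k by simp
  have "has_dim (H1 \<inter> H2) (k-2)"
    using meet_dim[of n H1 H2 U "k-2"] p1 p2 Us False e by (auto simp: Sub_iff)
  then have Y: "H1 \<inter> H2 \<in> Sub n (k-2)" using sub_inter p1 p2 by (auto simp: Sub_iff)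
  define P where "P = {V \<in> Sub n k. H1 \<inter> H2 \<subseteq> V \<and> V \<subseteq> B1}"
  have "kplane n k P" unfolding kplane_def P_def
    using p1 Y by (intro exI[of _ "H1 \<inter> H2"] exI[of _ B1]) auto
  moreover have "kpencil n k H1 B1 \<subseteq> P" "kpencil n k H2 B2 \<subseteq> P"
    using Beq by (auto simp: P_def kpencil_iff)
  ultimately show ?thesis by blast
qed

lemma adj_alt:
  assumes k: "1 < k"
    and p1: "H1 \<in> Sub n (k-1)" "B1 \<in> Sub n (k+1)" "H1 \<subseteq> B1"
    and p2: "H2 \<in> Sub n (k-1)" "B2 \<in> Sub n (k+1)" "H2 \<subseteq> B2"
    and p: "H \<in> Sub n (k-1)" "B \<in> Sub n (k+1)"
    and U: "U \<in> kpencil n k H1 B1" "U \<in> kpencil n k H2 B2"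
    and a: "a \<in> kpencil n k H1 B1" "a \<noteq> U" "a \<in> kpencil n k H B"
    and b: "b \<in> kpencil n k H2 B2" "b \<noteq> U" "b \<in> kpencil n k H B"
  shows "H1 = H2 \<or> B1 = B2"
proof (cases "H1 = H2")
  case True then show ?thesis by simp
next
  case False
  note ne = False
  have Us: "is_subspace n U" "has_dim U (Suc (k-1))" "U \<subseteq> B1" "U \<subseteq> B2" "H1 \<subseteq> U" "H2 \<subseteq> U"
    using U k by (auto simp: kpencil_iff Sub_iff)
  have as: "has_dim a k" "a \<subseteq> B" "a \<subseteq> B1" "H1 \<subseteq> a" using a by (auto simp: kpencil_iff Sub_iff)
  have bs: "has_dim b k" "b \<subseteq> B" "b \<subseteq> B2" "H2 \<subseteq> b" using b by (auto simp: kpencil_iff Sub_iff)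
  have "\<not> H2 \<subseteq> H1" using dim_eq p1(1) p2(1) ne by (metis Sub_iff)
  then have lt: "H1 \<subset> U \<inter> B" using Us as bs by blast
  have sUB: "is_subspace n (U \<inter> B)" using sub_inter Us(1) p(2) by (auto simp: Sub_iff)
  have dH1: "has_dim H1 (k-1)" using p1 by (simp add: Sub_iff)
  have "U \<inter> B = U" using between_top[OF sUB dH1 Us(2) lt] by blast
  then have UB: "U \<subseteq> B" by blast
  have "\<not> a \<subseteq> U" using dim_eq as(1) Us(2) a(2) k by (metis Suc_diff_1 less_imp_le_nat le_less_trans zero_less_one)
  then have lt1: "U \<subset> B1 \<inter> B" using UB Us as by blast
  have s1: "is_subspace n (B1 \<inter> B)" using sub_inter p1(2) p(2) by (auto simp: Sub_iff)
  have dU: "has_dim U k" using Us(2) k by simp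
  have dB1: "has_dim B1 (Suc k)" using p1(2) by (simp add: Sub_iff)
  have dB2: "has_dim B2 (Suc k)" using p2(2) by (simp add: Sub_iff)
  have "B1 \<inter> B = B1" using between_top[OF s1 dU dB1 lt1 ] by blast
  then have B1B: "B1 = B" using dim_eq p1(2) p(2) by (metis Int_lower2 Sub_iff)
  have "\<not> b \<subseteq> U" using dim_eq bs(1) Us(2) b(2) k by (metis Suc_diff_1 less_imp_le_nat le_less_trans zero_less_one)
  then have lt2: "U \<subset> B2 \<inter> B" using UB Us bs by blast
  have s2: "is_subspace n (B2 \<inter> B)" using sub_inter p2(2) p(2) by (auto simp: Sub_iff)
  have "B2 \<inter> B = B2" using between_top[OF s2 dU dB2 lt2] by blast
  then have "B2 = B" using dim_eq p2(2) p(2) by (metis Int_lower2 Sub_iff)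
  then show ?thesis using B1B by simp
qed

lemma pencil_in_plane:
  assumes k: "1 < k"
    and P: "P = {V \<in> Sub n k. Y \<subseteq> V \<and> V \<subseteq> Z}" "is_subspace n Z"
    and p1: "H1 \<in> Sub n (k-1)" "B1 \<in> Sub n (k+1)"
    and ab: "a \<noteq> b" "a \<in> kpencil n k H1 B1" "b \<in> kpencil n k H1 B1" "a \<in> P" "b \<in> P"
  shows "Y \<subseteq> H1 \<and> B1 \<subseteq> Z \<and> kpencil n k H1 B1 \<subseteq> P"
proof -
  have s: "a \<in> Sub n k" "b \<in> Sub n k" "H1 \<subseteq> a" "H1 \<subseteq> b" "a \<subseteq> B1" "b \<subseteq> B1"
    "Y \<subseteq> a" "Y \<subseteq> b" "a \<subseteq> Z" "b \<subseteq> Z"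
    using ab P by (auto simp: kpencil_iff)
  have "H1 = a \<inter> b" using pencil_H[OF p1(1) s(1,2) ab(1) s(3,4)] k by simp
  then have "Y \<subseteq> H1" using s by blast
  moreover have "B1 \<subseteq> Z" using pencil_B[OF p1(2) s(1,2) ab(1) s(5,6) P(2) s(9,10)] .
  moreover have "kpencil n k H1 B1 \<subseteq> P"
  proof
    fix V assume "V \<in> kpencil n k H1 B1"
    then have "V \<in> Sub n k" "H1 \<subseteq> V" "V \<subseteq> B1" by (auto simp: kpencil_iff)
    then show "V \<in> P" using P(1) calculation by blast
  qed
  ultimately show ?thesis by blast
qed

lemma plane_pencils_meet:
  assumes k: "1 < k"
    and P: "P = {V \<in> Sub n k. Y \<subseteq> V \<and> V \<subseteq> Z}" "Y \<subseteq> Z"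
    and dims: "(Y \<in> Sub n (k-2) \<and> Z \<in> Sub n (k+1)) \<or> (Y \<in> Sub n (k-1) \<and> Z \<in> Sub n (k+2))"
    and p1: "H1 \<in> Sub n (k-1)" "B1 \<in> Sub n (k+1)" "Y \<subseteq> H1" "B1 \<subseteq> Z" "H1 \<subseteq> B1"
    and p2: "H2 \<in> Sub n (k-1)" "B2 \<in> Sub n (k+1)" "Y \<subseteq> H2" "B2 \<subseteq> Z" "H2 \<subseteq> B2"
    and ne: "kpencil n k H1 B1 \<noteq> kpencil n k H2 B2"
  shows "\<exists>U. U \<in> kpencil n k H1 B1 \<and> U \<in> kpencil n k H2 B2"
  using dims
proof
  assume d: "Y \<in> Sub n (k-2) \<and> Z \<in> Sub n (k+1)"
  have "B1 = Z" "B2 = Z" using dim_eq p1 p2 d by (metis Sub_iff)+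
  then have Hne: "H1 \<noteq> H2" using ne by auto
  have e: "k - 1 = Suc (k-2)" using k by simp
  obtain D where D: "is_subspace n D" "has_dim D (Suc (Suc (k-2)))" "H1 \<subseteq> D" "H2 \<subseteq> D"
     "\<forall>S. is_subspace n S \<and> H1 \<subseteq> S \<and> H2 \<subseteq> S \<longrightarrow> D \<subseteq> S"
    using join_dim[of n H1 H2 Y "k-2"] p1 p2 d Hne e by (auto simp: Sub_iff)
  have BZ: "B1 = Z" "B2 = Z" using dim_eq p1 p2 d by (metis Sub_iff)+
  have "is_subspace n Z" using d by (simp add: Sub_iff)
  then have "D \<subseteq> Z" using D(5) p1(5) p2(5) BZ by blast
  moreover have "D \<in> Sub n k" using D k by (auto simp: Sub_iff Suc_diff_Suc numeral_2_eq_2)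
  ultimately show ?thesis using D BZ by (intro exI[of _ D]) (auto simp: kpencil_iff)
next
  assume d: "Y \<in> Sub n (k-1) \<and> Z \<in> Sub n (k+2)"
  have HY: "H1 = Y" "H2 = Y" using dim_eq p1 p2 d by (metis Sub_iff)+
  then have Bne: "B1 \<noteq> B2" using ne by auto
  have "has_dim (B1 \<inter> B2) k"
    using meet_dim[of n B1 B2 Z k] p1 p2 d Bne by (auto simp: Sub_iff)
  then have "B1 \<inter> B2 \<in> Sub n k" using sub_inter p1 p2 by (auto simp: Sub_iff)
  then show ?thesis using p1(5) p2(5) HY by (intro exI[of _ "B1 \<inter> B2"]) (auto simp: kpencil_iff)
qed



lemma line_pencil_rep:
  assumes "L \<in> lines n k W m" "1 \<le> k"
  obtains H B where "lclos n k L = kpencil n k H B" "H \<in> Sub n (k-1)" "B \<in> Sub n (k+1)" "H \<subseteq> B"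
    "L = lclos n k L \<inter> pts n k W m" "L \<subseteq> lclos n k L" "\<exists>a b. a \<noteq> b \<and> a \<in> L \<and> b \<in> L"
proof -
  note lp = line_props[OF assms]
  have 1: "is_kpencil n k (lclos n k L)" by (rule conjunct1[OF lp])
  have 2: "L = lclos n k L \<inter> pts n k W m" by (rule conjunct1[OF conjunct2[OF lp]])
  have 3: "L \<subseteq> lclos n k L" by (rule conjunct1[OF conjunct2[OF conjunct2[OF lp]]])
  have 4: "\<exists>a b. a \<noteq> b \<and> a \<in> L \<and> b \<in> L" by (rule conjunct2[OF conjunct2[OF conjunct2[OF lp]]])
  from 1 obtain H B where h: "H \<in> Sub n (k - 1)" "B \<in> Sub n (k + 1)" "H \<subseteq> B" "lclos n k L = kpencil n k H B"
    unfolding is_kpencil_def by blast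
  show thesis by (rule that[OF h(4) h(1) h(2) h(3) 2 3 4])
qed

lemma line_kp: "L \<in> lines n k W m \<Longrightarrow> 1 \<le> k \<Longrightarrow> is_kpencil n k (lclos n k L)"
  by (rule conjunct1[OF line_props])
lemma line_eq: "L \<in> lines n k W m \<Longrightarrow> 1 \<le> k \<Longrightarrow> L = lclos n k L \<inter> pts n k W m"
  by (rule conjunct1[OF conjunct2[OF line_props]])
lemma line_sub: "L \<in> lines n k W m \<Longrightarrow> 1 \<le> k \<Longrightarrow> L \<subseteq> lclos n k L"
  by (rule conjunct1[OF conjunct2[OF conjunct2[OF line_props]]])

lemma line_in_plane:
  assumes k: "1<k" and P: "P = {V \<in> Sub n k. Y \<subseteq> V \<and> V \<subseteq> Z}" "is_subspace n Z"
    and L: "L \<in> lines n k W m" "L \<subseteq> P"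
  shows "\<exists>H B. lclos n k L = kpencil n k H B \<and> H \<in> Sub n (k-1) \<and> B \<in> Sub n (k+1) \<and> H \<subseteq> B
     \<and> Y \<subseteq> H \<and> B \<subseteq> Z \<and> lclos n k L \<subseteq> P"
proof -
  have k1: "1 \<le> k" using k by simp
  obtain H B where HB: "lclos n k L = kpencil n k H B" "H \<in> Sub n (k-1)" "B \<in> Sub n (k+1)" "H \<subseteq> B"
    "L = lclos n k L \<inter> pts n k W m" "L \<subseteq> lclos n k L" "\<exists>a b. a \<noteq> b \<and> a \<in> L \<and> b \<in> L"
    by (rule line_pencil_rep[OF L(1) k1])
  obtain a b where ab: "a \<noteq> b" "a \<in> L" "b \<in> L" using HB(7) by blast
  have "a \<in> lclos n k L" "b \<in> lclos n k L" using ab HB(6) by blast+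
  then have ab2: "a \<in> kpencil n k H B" "b \<in> kpencil n k H B" using HB(1) by simp_all
  have ab3: "a \<in> P" "b \<in> P" using ab L(2) by blast+
  have "Y \<subseteq> H \<and> B \<subseteq> Z \<and> kpencil n k H B \<subseteq> P"
    using pencil_in_plane[OF k P HB(2,3) ab(1) ab2 ab3] .
  then show ?thesis using HB(1-4) by (intro exI[of _ H] exI[of _ B]) simp
qed

lemma lines_pts: "L \<in> lines n k W m \<Longrightarrow> L \<subseteq> pts n k W m"
  unfolding lines_def by blast

lemma mplane_of:
  assumes "kplane n k P" "L1 \<in> lines n k W m" "L2 \<in> lines n k W m" "L1 \<noteq> L2"
    "lclos n k L1 \<subseteq> P" "lclos n k L2 \<subseteq> P" "1 \<le> k"
  shows "mplane_over n k W m P (P \<inter> pts n k W m)"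
proof -
  have "L1 \<subseteq> P \<inter> pts n k W m" "L2 \<subseteq> P \<inter> pts n k W m"
    using line_sub[OF assms(2) assms(7)] line_sub[OF assms(3) assms(7)] assms(5,6) lines_pts[OF assms(2)]
      lines_pts[OF assms(3)] by blast+
  then show ?thesis unfolding mplane_over_def using assms by blast
qed

lemma semibundle_plane:
  assumes k: "1 < k" and X: "strong_subspace n k W m X"
    and L1: "L1 \<in> semibundle n k W m X U" and L2: "L2 \<in> semibundle n k W m X U" and ne: "L1 \<noteq> L2"
  shows "\<exists>P. kplane n k P \<and> lclos n k L1 \<subseteq> P \<and> lclos n k L2 \<subseteq> P"
proof -
  have k1: "1 \<le> k" using k by simp
  have L1': "L1 \<in> lines n k W m" "U \<in> lclos n k L1" "L1 \<subseteq> X" using L1 by (auto simp: semibundle_def)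
  have L2': "L2 \<in> lines n k W m" "U \<in> lclos n k L2" "L2 \<subseteq> X" using L2 by (auto simp: semibundle_def)
  obtain H1 B1 where p1: "lclos n k L1 = kpencil n k H1 B1" "H1 \<in> Sub n (k-1)" "B1 \<in> Sub n (k+1)" "H1 \<subseteq> B1"
    "L1 = lclos n k L1 \<inter> pts n k W m" "L1 \<subseteq> lclos n k L1" "\<exists>a b. a \<noteq> b \<and> a \<in> L1 \<and> b \<in> L1"
    by (rule line_pencil_rep[OF L1'(1) k1])
  obtain H2 B2 where p2: "lclos n k L2 = kpencil n k H2 B2" "H2 \<in> Sub n (k-1)" "B2 \<in> Sub n (k+1)" "H2 \<subseteq> B2"
    "L2 = lclos n k L2 \<inter> pts n k W m" "L2 \<subseteq> lclos n k L2" "\<exists>a b. a \<noteq> b \<and> a \<in> L2 \<and> b \<in> L2"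
    by (rule line_pencil_rep[OF L2'(1) k1])
  have lne: "lclos n k L1 \<noteq> lclos n k L2"
  proof
    assume "lclos n k L1 = lclos n k L2"
    then show False using ne p1(5) p2(5) by simp
  qed
  obtain a where a: "a \<in> L1" "a \<noteq> U" using p1(7) by blast
  obtain b where b: "b \<in> L2" "b \<noteq> U" using p2(7) by blast
  have kp1: "is_kpencil n k (lclos n k L1)" and kp2: "is_kpencil n k (lclos n k L2)"
    using line_kp[OF L1'(1) k1] line_kp[OF L2'(1) k1] by blast+
  have "a \<noteq> b"
  proof
    assume "a = b"
    have "a \<in> lclos n k L1" "a \<in> lclos n k L2" using a b p1(6) p2(6) \<open>a = b\<close> by blast+
    then have "lclos n k L1 = lclos n k L2"
      using pencil_unique[OF kp1 kp2 a(2) _ L1'(2) _ L2'(2) k1] by blast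
    then show False using lne by simp
  qed
  moreover have "a \<in> X" "b \<in> X" using a b L1'(3) L2'(3) by blast+
  ultimately obtain L where L: "L \<in> lines n k W m" "a \<in> L" "b \<in> L"
    using X unfolding strong_subspace_def by blast
  obtain H B where p: "lclos n k L = kpencil n k H B" "H \<in> Sub n (k-1)" "B \<in> Sub n (k+1)"
    "H \<subseteq> B" "L = lclos n k L \<inter> pts n k W m" "L \<subseteq> lclos n k L" "\<exists>a b. a \<noteq> b \<and> a \<in> L \<and> b \<in> L"
    by (rule line_pencil_rep[OF L(1) k1])
  have U1: "U \<in> kpencil n k H1 B1" using L1'(2) p1(1) by simp
  have U2: "U \<in> kpencil n k H2 B2" using L2'(2) p2(1) by simp
  have "a \<in> lclos n k L1" "b \<in> lclos n k L2" "a \<in> lclos n k L" "b \<in> lclos n k L"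
    using a(1) b(1) L(2,3) p1(6) p2(6) p(6) by blast+
  then have a1: "a \<in> kpencil n k H1 B1" and b2: "b \<in> kpencil n k H2 B2"
    and aL: "a \<in> kpencil n k H B" and bL: "b \<in> kpencil n k H B" using p1(1) p2(1) p(1) by simp_all
  have "H1 = H2 \<or> B1 = B2"
    using adj_alt[OF k p1(2,3,4) p2(2,3,4) p(2,3) U1 U2 a1 a(2) aL b2 b(2) bL] .
  moreover have "kpencil n k H1 B1 \<noteq> kpencil n k H2 B2" using lne p1(1) p2(1) by simp
  ultimately have "\<exists>P. kplane n k P \<and> kpencil n k H1 B1 \<subseteq> P \<and> kpencil n k H2 B2 \<subseteq> P"
    using two_pencils_plane[OF k p1(2,3,4) p2(2,3,4) U1 U2] by blast
  then show ?thesis using p1(1) p2(1) by simp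
qed

theorem lemma2p1:
  fixes W :: "('a::division_ring) vec set" and n k m w :: nat
  assumes "n \<ge> 3" and "1 < k" and "k + 1 < n"
    and "is_subspace n W" and "has_dim W w"
    and "int k - (int n - int w) \<le> int m" and "m \<le> k" and "m \<le> w"
  shows "(\<forall>E. mplane n k W m E \<longrightarrow> clique (pi_rel n k W m) (flat n k W m E))
       \<and> (\<forall>X U. strong_subspace n k W m X \<and> U \<in> pclos n k X \<longrightarrow>
              clique (pi_rel n k W m) (semibundle n k W m X U))
       \<and> (\<forall>E F. semiflat_on n k W m E F \<longrightarrow> clique (rho_rel n k W m) F)
       \<and> (\<forall>X U. strong_subspace n k W m X \<and> U \<in> pclos n k X \<and> U \<in> pts n k W m \<longrightarrow>
              clique (rho_rel n k W m) (semibundle n k W m X U))"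
proof (intro conjI allI impI)
  have k: "1 < k" using assms by simp
  have k1: "1 \<le> k" using assms by simp
  show "clique (pi_rel n k W m) (flat n k W m E)" if "mplane n k W m E" for E
    using that unfolding clique_def flat_def pi_rel_def by blast
  show "clique (pi_rel n k W m) (semibundle n k W m X U)"
    if HX: "strong_subspace n k W m X \<and> U \<in> pclos n k X" for X U
    unfolding clique_def
  proof (intro ballI impI)
    fix L1 L2 assume L: "L1 \<in> semibundle n k W m X U" "L2 \<in> semibundle n k W m X U" "L1 \<noteq> L2"
    then obtain P where P: "kplane n k P" "lclos n k L1 \<subseteq> P" "lclos n k L2 \<subseteq> P"
      using semibundle_plane[OF k] HX by blast
    have ls: "L1 \<in> lines n k W m" "L2 \<in> lines n k W m" using L by (auto simp: semibundle_def)
    have "mplane_over n k W m P (P \<inter> pts n k W m)" using mplane_of[OF P(1) ls L(3) P(2,3) k1] .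
    moreover have "L1 \<subseteq> P \<inter> pts n k W m" "L2 \<subseteq> P \<inter> pts n k W m"
      using line_sub[OF ls(1) k1] line_sub[OF ls(2) k1] lines_pts[OF ls(1)] lines_pts[OF ls(2)] P by blast+
    ultimately show "pi_rel n k W m L1 L2" unfolding pi_rel_def mplane_def using ls by blast
  qed
  show "clique (rho_rel n k W m) (semibundle n k W m X U)"
    if HX: "strong_subspace n k W m X \<and> U \<in> pclos n k X \<and> U \<in> pts n k W m" for X U
    unfolding clique_def
  proof (intro ballI impI)
    fix L1 L2 assume L: "L1 \<in> semibundle n k W m X U" "L2 \<in> semibundle n k W m X U" "L1 \<noteq> L2"
    then obtain P where P: "kplane n k P" "lclos n k L1 \<subseteq> P" "lclos n k L2 \<subseteq> P"
      using semibundle_plane[OF k] HX by blast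
    have ls: "L1 \<in> lines n k W m" "L2 \<in> lines n k W m" "U \<in> lclos n k L1" "U \<in> lclos n k L2"
      using L by (auto simp: semibundle_def)
    have "mplane_over n k W m P (P \<inter> pts n k W m)" using mplane_of[OF P(1) ls(1,2) L(3) P(2,3) k1] .
    moreover have "U \<in> P" using ls P by blast
    moreover have "L1 \<in> line_pencil n k W m P U" "L2 \<in> line_pencil n k W m P U"
      using ls P unfolding line_pencil_def by blast+
    ultimately show "rho_rel n k W m L1 L2" unfolding rho_rel_def using HX by blast
  qed
  show "clique (rho_rel n k W m) F" if sf: "semiflat_on n k W m E F" for E F
    unfolding clique_def
  proof (intro ballI impI)
    obtain P where mP: "mplane_over n k W m P E" using sf unfolding semiflat_on_def mplane_def by blast
    obtain A where A: "nonpar_aff n k W m E A"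
        "F = {L \<in> lines n k W m. proj_line n k W m L \<and> L \<subseteq> E} \<union> A"
      using sf unfolding semiflat_on_def by blast
    have PE: "kplane n k P" "E = P \<inter> pts n k W m" using mP unfolding mplane_over_def by blast+
    obtain Y Z where YZ: "Y \<subseteq> Z" "(Y \<in> Sub n (k-2) \<and> Z \<in> Sub n (k+1)) \<or> (Y \<in> Sub n (k-1) \<and> Z \<in> Sub n (k+2))"
      "P = {U \<in> Sub n k. Y \<subseteq> U \<and> U \<subseteq> Z}"
      using PE(1) unfolding kplane_def by blast
    have sZ: "is_subspace n Z" using YZ(2) by (auto simp: Sub_iff)
    fix L1 L2 assume L: "L1 \<in> F" "L2 \<in> F" "L1 \<noteq> L2"
    have inF: "L \<in> lines n k W m \<and> L \<subseteq> E \<and> (proj_line n k W m L \<or> L \<in> A)" if "L \<in> F" for L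
      using that A unfolding nonpar_aff_def aff_line_def by blast
    have ls: "L1 \<in> lines n k W m" "L2 \<in> lines n k W m" "L1 \<subseteq> P" "L2 \<subseteq> P"
      using inF[OF L(1)] inF[OF L(2)] PE(2) by blast+
    obtain H1 B1 where h1: "lclos n k L1 = kpencil n k H1 B1" "H1 \<in> Sub n (k-1)" "B1 \<in> Sub n (k+1)"
      "H1 \<subseteq> B1" "Y \<subseteq> H1" "B1 \<subseteq> Z" "lclos n k L1 \<subseteq> P"
      using line_in_plane[OF k YZ(3) sZ ls(1,3)] by blast
    obtain H2 B2 where h2: "lclos n k L2 = kpencil n k H2 B2" "H2 \<in> Sub n (k-1)" "B2 \<in> Sub n (k+1)"
      "H2 \<subseteq> B2" "Y \<subseteq> H2" "B2 \<subseteq> Z" "lclos n k L2 \<subseteq> P"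
      using line_in_plane[OF k YZ(3) sZ ls(2,4)] by blast
    have lne: "lclos n k L1 \<noteq> lclos n k L2"
    proof
      assume "lclos n k L1 = lclos n k L2"
      then show False using L(3) line_eq[OF ls(1) k1] line_eq[OF ls(2) k1] by simp
    qed
    have "kpencil n k H1 B1 \<noteq> kpencil n k H2 B2" using lne h1(1) h2(1) by simp
    then obtain U where "U \<in> kpencil n k H1 B1" "U \<in> kpencil n k H2 B2"
      using plane_pencils_meet[OF k YZ(3,1,2) h1(2,3,5,6,4) h2(2,3,5,6,4)] by blast
    then have U: "U \<in> lclos n k L1" "U \<in> lclos n k L2" using h1(1) h2(1) by simp_all
    have Upts: "U \<in> pts n k W m"
    proof (cases "proj_line n k W m L1 \<or> proj_line n k W m L2")
      case True
      then show ?thesis using U lines_pts[OF ls(1)] lines_pts[OF ls(2)] unfolding proj_line_def by auto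
    next
      case False
      then have "L1 \<in> A" "L2 \<in> A" using inF L by blast+
      then have "\<not> parallel n k W m L1 L2" "aff_line n k W m L1" "aff_line n k W m L2"
        using A(1) L(3) unfolding nonpar_aff_def by blast+
      then show ?thesis using U unfolding parallel_def by blast
    qed
    have "U \<in> P" using U h1(7) by blast
    moreover have "L1 \<in> line_pencil n k W m P U" "L2 \<in> line_pencil n k W m P U"
      using ls U h1(7) h2(7) unfolding line_pencil_def by blast+
    ultimately show "rho_rel n k W m L1 L2" unfolding rho_rel_def using mP Upts by blast
  qed
qed


end
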